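(* Let $L\ge1$, $\delta>0$, $\lambda^0\in(0,\infty)^L$, continuous strictly increasing $c_1,\dots,c_L:[0,\infty)\to\mathbb{R}$, and for $m\in\mathbb{N}$ let $f_m,g_m:[0,\infty)^L\to\mathbb{R}$ be $$f_m(\beta)=\sum_{i=1}^L c_i(\beta_i)+\delta\Big(1-\prod_{i=1}^L\big(1-\tilde\alpha(\beta_i,m\lambda^0_i)\big)\Big),\quad g_m(\beta)=\sum_{i=1}^L c_i(\beta_i)+\delta\Big(1-\prod_{i=1}^L\big(1-UB(\beta_i,m\lambda^0_i)\big)\Big).$$ Suppose $\beta^F_m$ minimizes $f_m$ over $[0,\infty)^L$ and $\beta^G_m$ minimizes $g_m$ over $[0,\infty)^L$. Then $$\lim_{m\to\infty}\big(f_m(\beta^G_m)-f_m(\beta^F_m)\big)=0.$$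
   Context: $\phi,\Phi$ are the standard normal density and distribution function. For $\lambda>0$ and real $n\ge 0$, $\bar\alpha(n,\lambda)=\min\Big\{1,\big[\lambda\int_0^\infty t e^{-\lambda t}(1+t)^{n-1}\,dt\big]^{-1}\Big\}$ is the continuous Erlang-C function, and $\tilde\alpha(\beta,\lambda)=\bar\alpha(\lambda+\beta\sqrt\lambda,\lambda)$. For $\lambda>0,\beta\ge 0$ set $n=\lambda+\beta\sqrt{\lambda}$, $\rho=\lambda/n$, $a=\sqrt{-2n(1-\rho+\ln\rho)}$, $\gamma=(n-\lambda)/\sqrt{n}$, and $UB(\beta,\lambda)=\left[\rho+\gamma\left(\frac{\Phi(a)}{\phi(a)}+\frac{2}{3\sqrt{n}}\right)\right]^{-1}$. It is known (Janssen, van Leeuwaarden and Zwart) that $\tilde\alpha(\beta,\lambda)\le UB(\beta,\lambda)$ for all $\lambda,\beta>0$. *)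

theory Defs
  imports "HOL-Probability.Probability"
begin

definition std_phi :: "real \<Rightarrow> real" where
  "std_phi x = std_normal_density x"

definition std_Phi :: "real \<Rightarrow> real" where
  "std_Phi x = integral {..x} std_normal_density"

definition erlangC_bar :: "real \<Rightarrow> real \<Rightarrow> real" where
  "erlangC_bar n lam =
     min 1 (inverse (lam * integral {0..} (\<lambda>t. t * exp (- lam * t) * (1 + t) powr (n - 1))))"

definition erlangC_tilde :: "real \<Rightarrow> real \<Rightarrow> real" where
  "erlangC_tilde \<beta> lam = erlangC_bar (lam + \<beta> * sqrt lam) lam"

text \<open>The upper bound UB(beta, lambda) of Janssen, van Leeuwaarden and Zwart.\<close>
definition UB :: "real \<Rightarrow> real \<Rightarrow> real" where
  "UB \<beta> lam =
     (let n = lam + \<beta> * sqrt lam;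
          \<rho> = lam / n;
          a = sqrt (- 2 * n * (1 - \<rho> + ln \<rho>));
          \<gamma> = (n - lam) / sqrt n
      in inverse (\<rho> + \<gamma> * (std_Phi a / std_phi a + 2 / (3 * sqrt n))))"

definition f_obj :: "('L::finite \<Rightarrow> real \<Rightarrow> real) \<Rightarrow> real \<Rightarrow> real^'L \<Rightarrow> nat \<Rightarrow> real^'L \<Rightarrow> real" where
  "f_obj c \<delta> lam0 m \<beta> =
     (\<Sum>i\<in>UNIV. c i (\<beta> $ i)) +
     \<delta> * (1 - (\<Prod>i\<in>UNIV. (1 - erlangC_tilde (\<beta> $ i) (real m * lam0 $ i))))"

definition g_obj :: "('L::finite \<Rightarrow> real \<Rightarrow> real) \<Rightarrow> real \<Rightarrow> real^'L \<Rightarrow> nat \<Rightarrow> real^'L \<Rightarrow> real" where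
  "g_obj c \<delta> lam0 m \<beta> =
     (\<Sum>i\<in>UNIV. c i (\<beta> $ i)) +
     \<delta> * (1 - (\<Prod>i\<in>UNIV. (1 - UB (\<beta> $ i) (real m * lam0 $ i))))"

definition nonneg_orthant :: "(real^'L::finite) set" where
  "nonneg_orthant = {\<beta>. \<forall>i. 0 \<le> \<beta> $ i}"

end

theory Submission
  imports Defs
begin


lemma nonneg_from_deriv:
  fixes F F' :: "real \<Rightarrow> real"
  assumes "F 0 = 0" "\<And>x. x \<ge> 0 \<Longrightarrow> (F has_real_derivative F' x) (at x)"
    "\<And>x. x \<ge> 0 \<Longrightarrow> F' x \<ge> 0" "x \<ge> 0"
  shows "F x \<ge> 0"
proof -
  have "F 0 \<le> F x"
    by (rule DERIV_nonneg_imp_nondecreasing[OF \<open>x\<ge>0\<close>]) (use assms in auto)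
  thus ?thesis using assms by simp
qed

lemma ln_lower2: fixes x :: real assumes "x \<ge> 0" shows "x - x^2/2 \<le> ln (1+x)"
proof -
  have "0 \<le> ln (1+x) - x + x^2/2"
  proof (rule nonneg_from_deriv[where F="\<lambda>x. ln (1+x) - x + x^2/2" and F'="\<lambda>x. x^2/(1+x)"])
    fix x :: real assume x: "x \<ge> 0"
    show "((\<lambda>x. ln (1+x) - x + x^2/2) has_real_derivative x^2/(1+x)) (at x)"
      using x by (auto intro!: derivative_eq_intros simp: field_simps power2_eq_square)
    show "x^2/(1+x) \<ge> 0" using x by simp
  qed (use assms in auto)
  thus ?thesis by simp
qed

lemma ln_upper3: fixes x :: real assumes "x \<ge> 0" shows "ln (1+x) \<le> x - x^2/2 + x^3/3"
proof -
  have "0 \<le> x - x^2/2 + x^3/3 - ln (1+x)"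
  proof (rule nonneg_from_deriv[where F="\<lambda>x. x - x^2/2 + x^3/3 - ln (1+x)" and F'="\<lambda>x. x^3/(1+x)"])
    fix x :: real assume x: "x \<ge> 0"
    show "((\<lambda>x. x - x^2/2 + x^3/3 - ln (1+x)) has_real_derivative x^3/(1+x)) (at x)"
      using x by (auto intro!: derivative_eq_intros simp: field_simps power2_eq_square power3_eq_cube)
    show "x^3/(1+x) \<ge> 0" using x by simp
  qed (use assms in auto)
  thus ?thesis by simp
qed

lemma ln_upper_q: fixes x :: real assumes "x \<ge> 0" shows "ln (1+x) \<le> x - x^2/(2*(1+x))"
proof -
  have "0 \<le> x - x^2/(2*(1+x)) - ln (1+x)"
  proof (rule nonneg_from_deriv[where F="\<lambda>x. x - x^2/(2*(1+x)) - ln (1+x)" and F'="\<lambda>x. x^2/(2*(1+x)^2)"])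
    fix x :: real assume x: "x \<ge> 0"
    show "((\<lambda>x. x - x^2/(2*(1+x)) - ln (1+x)) has_real_derivative x^2/(2*(1+x)^2)) (at x)"
      using x apply (intro derivative_eq_intros)
      apply (rule refl | simp)+
      apply (simp add: divide_simps)
      apply (simp add: algebra_simps power2_eq_square)
      done
    show "x^2/(2*(1+x)^2) \<ge> 0" using x by simp
  qed (use assms in auto)
  thus ?thesis by simp
qed



definition Wf :: "real \<Rightarrow> real" where
  "Wf a = set_lebesgue_integral lborel {0..} (\<lambda>s. exp (a * s - s^2/2))"

lemma gauss_eq: fixes a s :: real shows "exp (a * s - s^2/2) = exp (a^2/2) * sqrt (2*pi) * normal_density a 1 s"
proof -
  have "exp (a^2/2) * exp (-((s - a)^2)/2) = exp (a * s - s^2/2)"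
    by (subst exp_add[symmetric]) (simp add: power2_eq_square field_simps)
  thus ?thesis unfolding normal_density_def by simp
qed

lemma int_gauss: fixes a :: real shows "set_integrable lborel {0..} (\<lambda>s. exp (a * s - s^2/2))"
proof -
  have "integrable lborel (\<lambda>s. exp (a^2/2) * sqrt (2*pi) * normal_density a 1 s)"
    by simp
  hence "integrable lborel (\<lambda>s. exp (a * s - s^2/2))" by (simp add: gauss_eq)
  thus ?thesis unfolding set_integrable_def by (intro integrable_mult_indicator) auto
qed

lemma int_gauss1: fixes a :: real shows "set_integrable lborel {0..} (\<lambda>s. s * exp (a * s - s^2/2))"
proof -
  have "integrable lborel (\<lambda>s. exp (a^2/2) * sqrt (2*pi) * (normal_density a 1 s * s))"
    using integrable_normal_moment_nz_1[of 1 a] by (simp del: integrable_mult_left_iff)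
  moreover have "(\<lambda>s. s * exp (a * s - s^2/2)) = (\<lambda>s. exp (a^2/2) * sqrt (2*pi) * (normal_density a 1 s * s))"
    by (auto simp: gauss_eq)
  ultimately have "integrable lborel (\<lambda>s. s * exp (a * s - s^2/2))" by simp
  thus ?thesis unfolding set_integrable_def by (intro integrable_mult_indicator) auto
qed

lemma int_expm: "set_integrable lborel {0..} (\<lambda>s::real. s^i * exp (- s))"
proof -
  have eq: "\<And>x. ennreal (erlang_density 0 1 x * x ^ i) = ennreal (norm (indicator {0..} x *\<^sub>R (x^i * exp (-x))))"
    by (auto simp: erlang_density_def indicator_def)
  have "(\<integral>\<^sup>+ x. ennreal (norm (indicator {0..} x *\<^sub>R ((x::real)^i * exp (-x)))) \<partial>lborel) = (\<integral>\<^sup>+ x. ennreal (erlang_density 0 1 x * x ^ i) \<partial>lborel)"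
    by (rule nn_integral_cong) (auto simp: exponential_density_def indicator_def abs_mult)
  also have "\<dots> = ennreal (fact i)" using nn_integral_erlang_ith_moment[of 1 0 i] by simp
  finally have "(\<integral>\<^sup>+ x. ennreal (norm (indicator {0..} x *\<^sub>R ((x::real)^i * exp (-x)))) \<partial>lborel) < \<infinity>"
    by simp
  thus ?thesis unfolding set_integrable_def
    by (subst integrable_iff_bounded) auto
qed

lemma Wf_pos: "Wf 0 \<ge> exp (-1/2)"
proof -
  have h2: "set_integrable lborel {0..1} (\<lambda>s::real. exp (0 * s - s^2/2))"
      by (intro borel_integrable_atLeastAtMost' continuous_intros) auto
  have "set_lebesgue_integral lborel {0..1} (\<lambda>s::real. exp (-1/2::real)) \<le> set_lebesgue_integral lborel {0..1} (\<lambda>s::real. exp (0 * s - s^2/2))"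
  proof (rule set_integral_mono)
    show "set_integrable lborel {0..1} (\<lambda>s::real. exp (-1/2::real))"
      by (intro borel_integrable_atLeastAtMost' continuous_intros)
    show h2: "set_integrable lborel {0..1} (\<lambda>s::real. exp (0 * s - s^2/2))"
      by (intro borel_integrable_atLeastAtMost' continuous_intros) auto
    fix x :: real assume "x \<in> {0..1}"
    then have "x^2 \<le> 1" by (simp add: power_le_one)
    thus "exp (-1/2) \<le> exp (0*x - x^2/2)" by simp
  qed
  also have "\<dots> \<le> Wf 0" unfolding Wf_def set_lebesgue_integral_def
    apply (rule integral_mono)
    using int_gauss[of 0] h2
    by (auto simp: set_integrable_def indicator_def)
  finally show ?thesis by (simp add: set_integral_const)
qed

lemma Wf_mono: "0 \<le> a \<Longrightarrow> Wf 0 \<le> Wf a"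
  unfolding Wf_def
  by (rule set_integral_mono[OF int_gauss int_gauss]) (auto intro: mult_nonneg_nonneg)



lemma phi_shift: fixes a s :: real
  shows "std_normal_density (a - s) = std_normal_density a * exp (a * s - s^2/2)"
proof -
  have "exp (- (a - s)\<^sup>2 / 2) = exp (- a\<^sup>2 / 2) * exp (a * s - s^2/2)"
    by (subst exp_add[symmetric]) (simp add: power2_eq_square field_simps)
  thus ?thesis unfolding std_normal_density_def by simp
qed

lemma PhiW: "std_Phi a / std_phi a = Wf a"
proof -
  have int: "set_integrable lborel {..a} std_normal_density"
    unfolding set_integrable_def by (intro integrable_mult_indicator) auto
  have "std_Phi a = set_lebesgue_integral lborel {..a} std_normal_density"
    unfolding std_Phi_def using set_borel_integral_eq_integral(2)[OF int] by simp
  also have "\<dots> = (\<integral>x. indicator {..a} x *\<^sub>R std_normal_density x \<partial>lborel)"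
    by (simp add: set_lebesgue_integral_def)
  also have "\<dots> = \<bar>-1\<bar> *\<^sub>R (\<integral>s. indicator {..a} (a + -1 * s) *\<^sub>R std_normal_density (a + -1 * s) \<partial>lborel)"
    by (rule lborel_integral_real_affine) simp
  also have "\<dots> = (\<integral>s. indicator {0..} s *\<^sub>R (std_normal_density a * exp (a * s - s^2/2)) \<partial>lborel)"
    by (auto intro!: Bochner_Integration.integral_cong simp: phi_shift indicator_def)
  also have "\<dots> = std_normal_density a * Wf a"
    unfolding Wf_def set_lebesgue_integral_def[symmetric] by simp
  finally have "std_Phi a = std_phi a * Wf a" by (simp add: std_phi_def)
  moreover have "std_phi a > 0" by (simp add: std_phi_def normal_density_pos)
  ultimately show ?thesis by simp
qed

lemma set_integral_Icc_lim:
  fixes f :: "real \<Rightarrow> real"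
  assumes "set_integrable lborel {0..} f"
  shows "(\<lambda>k. set_lebesgue_integral lborel {0..real k} f) \<longlonglongrightarrow> set_lebesgue_integral lborel {0..} f"
  unfolding set_lebesgue_integral_def
proof (rule integral_dominated_convergence[where w="\<lambda>x. norm (indicator {0..} x *\<^sub>R f x)"])
  show "(\<lambda>x. indicat_real {0..} x *\<^sub>R f x) \<in> borel_measurable lborel"
    using assms unfolding set_integrable_def by auto
  show "\<And>i. (\<lambda>x. indicat_real {0..real i} x *\<^sub>R f x) \<in> borel_measurable lborel"
  proof -
    fix i
    have "(\<lambda>x. indicat_real {0..real i} x *\<^sub>R (indicat_real {0..} x *\<^sub>R f x)) \<in> borel_measurable lborel"
      using assms unfolding set_integrable_def by auto
    moreover have "(\<lambda>x. indicat_real {0..real i} x *\<^sub>R (indicat_real {0..} x *\<^sub>R f x)) = (\<lambda>x. indicat_real {0..real i} x *\<^sub>R f x)"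
      by (auto simp: indicator_def)
    ultimately show "(\<lambda>x. indicat_real {0..real i} x *\<^sub>R f x) \<in> borel_measurable lborel" by simp
  qed
  show "integrable lborel (\<lambda>x. norm (indicat_real {0..} x *\<^sub>R f x))"
    using assms unfolding set_integrable_def by auto
  show "AE x in lborel. (\<lambda>i. indicat_real {0..real i} x *\<^sub>R f x) \<longlonglongrightarrow> indicat_real {0..} x *\<^sub>R f x"
  proof (rule AE_I2)
    fix x :: real
    have "eventually (\<lambda>i. indicat_real {0..real i} x *\<^sub>R f x = indicat_real {0..} x *\<^sub>R f x) sequentially"
    proof -
      obtain N :: nat where "x \<le> real N" using real_arch_simple by blast
      hence "\<forall>i\<ge>N. indicat_real {0..real i} x *\<^sub>R f x = indicat_real {0..} x *\<^sub>R f x"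
        by (auto simp: indicator_def)
      thus ?thesis unfolding eventually_sequentially by blast
    qed
    thus "(\<lambda>i. indicat_real {0..real i} x *\<^sub>R f x) \<longlonglongrightarrow> indicat_real {0..} x *\<^sub>R f x"
      by (rule tendsto_eventually)
  qed
  show "\<And>i. AE x in lborel. norm (indicat_real {0..real i} x *\<^sub>R f x) \<le> norm (indicat_real {0..} x *\<^sub>R f x)"
    by (auto simp: indicator_def)
qed

lemma exp_quad_lim: fixes b :: real shows "(\<lambda>k. exp (b * real k - (real k)^2/2)) \<longlonglongrightarrow> 0"
  by real_asymp

lemma Tlemma: fixes b :: real
  shows "set_lebesgue_integral lborel {0..} (\<lambda>s. s * exp (b * s - s^2/2)) = 1 + b * Wf b"
proof -
  let ?f = "\<lambda>s. (s - b) * exp (b * s - s^2/2)"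
  have intf: "set_integrable lborel {0..} ?f"
    using int_gauss1[of b] int_gauss[of b] by (simp add: left_diff_distrib)
  have ftc: "set_lebesgue_integral lborel {0..real k} ?f = 1 - exp (b * real k - (real k)^2/2)" for k
  proof -
    have "set_lebesgue_integral lborel {0..real k} ?f = (-exp (b * real k - (real k)^2/2)) - (- exp (b * 0 - 0^2/2))"
      unfolding set_lebesgue_integral_def
    proof (rule integral_FTC_atLeastAtMost)
      fix x :: real
      show "((\<lambda>x. - exp (b * x - x^2/2)) has_vector_derivative ?f x) (at x within {0..real k})"
        unfolding has_real_derivative_iff_has_vector_derivative[symmetric]
        by (auto intro!: derivative_eq_intros simp: algebra_simps)
    qed (auto intro!: continuous_intros)
    thus ?thesis by simp
  qed
  have "(\<lambda>k. set_lebesgue_integral lborel {0..real k} ?f) \<longlonglongrightarrow> set_lebesgue_integral lborel {0..} ?f"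
    by (rule set_integral_Icc_lim[OF intf])
  moreover have "(\<lambda>k. set_lebesgue_integral lborel {0..real k} ?f) \<longlonglongrightarrow> 1 - 0"
    unfolding ftc by (intro tendsto_intros exp_quad_lim)
  ultimately have "set_lebesgue_integral lborel {0..} ?f = 1"
    using LIMSEQ_unique by fastforce
  moreover have "set_lebesgue_integral lborel {0..} ?f =
      set_lebesgue_integral lborel {0..} (\<lambda>s. s * exp (b * s - s^2/2)) - b * Wf b"
  proof -
    have "set_lebesgue_integral lborel {0..} ?f =
      set_lebesgue_integral lborel {0..} (\<lambda>s. s * exp (b * s - s^2/2) - b * exp (b * s - s^2/2))"
      by (simp add: left_diff_distrib)
    also have "\<dots> = set_lebesgue_integral lborel {0..} (\<lambda>s. s * exp (b * s - s^2/2)) -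
        set_lebesgue_integral lborel {0..} (\<lambda>s. b * exp (b * s - s^2/2))"
      by (rule set_integral_diff(2)) (use int_gauss1 int_gauss in auto)
    finally show ?thesis unfolding Wf_def by simp
  qed
  ultimately show ?thesis by simp
qed



lemma dct_ev:
  fixes s :: "nat \<Rightarrow> real \<Rightarrow> real" and w f :: "real \<Rightarrow> real"
  assumes "f \<in> borel_measurable lborel" "\<And>i. s i \<in> borel_measurable lborel" "integrable lborel w"
    "AE x in lborel. (\<lambda>i. s i x) \<longlonglongrightarrow> f x"
    "eventually (\<lambda>i. AE x in lborel. norm (s i x) \<le> w x) sequentially"
  shows "(\<lambda>i. integral\<^sup>L lborel (s i)) \<longlonglongrightarrow> integral\<^sup>L lborel f"
proof -
  obtain N where N: "\<And>i. i \<ge> N \<Longrightarrow> AE x in lborel. norm (s i x) \<le> w x"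
    using assms(5) unfolding eventually_sequentially by blast
  have "(\<lambda>i. integral\<^sup>L lborel (s (i + N))) \<longlonglongrightarrow> integral\<^sup>L lborel f"
  proof (rule integral_dominated_convergence[where w=w])
    show "AE x in lborel. (\<lambda>i. s (i + N) x) \<longlonglongrightarrow> f x"
      using assms(4) by eventually_elim (rule LIMSEQ_ignore_initial_segment)
    show "\<And>i. AE x in lborel. norm (s (i + N) x) \<le> w x" using N by simp
  qed (use assms in auto)
  thus ?thesis by (rule LIMSEQ_offset)
qed

lemma Wcont:
  assumes a: "a \<longlonglongrightarrow> (a0::real)"
  shows "(\<lambda>k. Wf (a k)) \<longlonglongrightarrow> Wf a0"
proof -
  define M where "M = \<bar>a0\<bar> + 1"
  have ev: "eventually (\<lambda>k. \<bar>a k\<bar> \<le> M) sequentially"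
  proof -
    have "eventually (\<lambda>k. dist (a k) a0 < 1) sequentially"
      using a by (rule tendstoD) simp
    thus ?thesis by eventually_elim (auto simp: M_def dist_real_def)
  qed
  let ?w = "\<lambda>x. exp ((M+1)^2) * (indicator {0..} x *\<^sub>R (x^0 * exp (-x)))"
  show ?thesis unfolding Wf_def set_lebesgue_integral_def
  proof (rule dct_ev[where w="?w"])
    show "integrable lborel ?w"
      using int_expm[of 0] unfolding set_integrable_def
      by (rule integrable_mult_right)
    show "AE x in lborel. (\<lambda>i. indicator {0..} x *\<^sub>R exp (a i * x - x^2/2)) \<longlonglongrightarrow> indicator {0..} x *\<^sub>R exp (a0 * x - x^2/2)"
      by (intro AE_I2 tendsto_intros a)
    show "eventually (\<lambda>i. AE x in lborel. norm (indicator {0..} x *\<^sub>R exp (a i * x - x^2/2)) \<le> ?w x) sequentially"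
      using ev
    proof eventually_elim
      case (elim k)
      show ?case
      proof (rule AE_I2)
        fix x :: real
        show "norm (indicator {0..} x *\<^sub>R exp (a k * x - x^2/2)) \<le> ?w x"
        proof (cases "x \<ge> 0")
          case True
          have "a k * x \<le> M * x" using elim True
            by (metis abs_ge_self mult_right_mono order_trans)
          moreover have "M * x - x^2/2 + x \<le> (M+1)^2"
            using True zero_le_power2[of "x - (M+1)"] zero_le_power2[of "M+1"] by (simp add: power2_eq_square algebra_simps)
          ultimately have "a k * x - x^2/2 \<le> (M+1)^2 + (-x)" by linarith
          hence "exp (a k * x - x^2/2) \<le> exp ((M+1)^2 + (-x))" by (rule exp_mono)
          also have "exp ((M+1)^2 + (-x)) = exp ((M+1)^2) * exp (-x)" by (rule exp_add)
          finally show ?thesis using True by simp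
        qed simp
      qed
    qed
  qed measurable
qed



definition Af :: "real \<Rightarrow> real \<Rightarrow> real \<Rightarrow> real" where
  "Af lam b s = (lam + b * sqrt lam - 1) * ln (1 + s / sqrt lam) - sqrt lam * s"

definition gI :: "real \<Rightarrow> real \<Rightarrow> real \<Rightarrow> real" where
  "gI lam b t = t * exp (- lam * t) * (1 + t) powr (lam + b * sqrt lam - 1)"

lemma gI_scaled:
  assumes "lam > 0" "s \<ge> 0"
  shows "sqrt lam * gI lam b (s / sqrt lam) = s * exp (Af lam b s)"
proof -
  let ?sl = "sqrt lam"
  have sl: "?sl > 0" using assms by simp
  have "lam * (s / ?sl) = ?sl * s" using sl
    by (metis assms(1) less_eq_real_def real_div_sqrt times_divide_eq_right mult.commute)
  moreover have "(1 + s / ?sl) powr (lam + b * ?sl - 1) = exp ((lam + b * ?sl - 1) * ln (1 + s / ?sl))"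
  proof -
    have "1 + s / ?sl > 0" using assms sl by (simp add: add_pos_nonneg)
    thus ?thesis by (simp add: powr_def)
  qed
  ultimately have "gI lam b (s / ?sl) = (s / ?sl) * exp (- (?sl * s)) * exp ((lam + b * ?sl - 1) * ln (1 + s / ?sl))"
    unfolding gI_def by (metis minus_mult_left)
  hence "?sl * gI lam b (s / ?sl) = s * (exp (- (?sl * s)) * exp ((lam + b * ?sl - 1) * ln (1 + s / ?sl)))"
    using sl by (simp add: field_simps)
  also have "\<dots> = s * exp (Af lam b s)" unfolding Af_def by (simp add: exp_add[symmetric] algebra_simps)
  finally show ?thesis .
qed

lemma Q_eq:
  assumes lam: "lam > 0" and int: "set_integrable lborel {0..} (\<lambda>s. s * exp (Af lam b s))"
  shows "lam * integral {0..} (gI lam b) = set_lebesgue_integral lborel {0..} (\<lambda>s. s * exp (Af lam b s))"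
proof -
  let ?sl = "sqrt lam"
  have sl: "?sl > 0" using lam by simp
  let ?F = "\<lambda>t. indicator {0..} t *\<^sub>R gI lam b t"
  have eqF: "?F (0 + (1/?sl) * x) = indicator {0..} x *\<^sub>R (s_fun x / ?sl)" if "s_fun = (\<lambda>s. s * exp (Af lam b s))" for x s_fun
  proof (cases "x \<ge> 0")
    case True
    have "gI lam b (x / ?sl) = x * exp (Af lam b x) / ?sl"
      using gI_scaled[OF lam True, of b] sl by (simp add: field_simps)
    thus ?thesis using True sl that by (simp add: indicator_def)
  next
    case False
    thus ?thesis using sl by (simp add: indicator_def field_simps)
  qed
  have intF: "integrable lborel ?F"
  proof -
    have "integrable lborel (\<lambda>x. ?F (0 + (1/?sl) * x))"
    proof -
      have "integrable lborel (\<lambda>x. indicator {0..} x *\<^sub>R ((x * exp (Af lam b x)) / ?sl))"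
        using int unfolding set_integrable_def by (simp add: integrable_divide_zero)
      thus ?thesis using eqF by simp
    qed
    thus ?thesis using lborel_integrable_real_affine_iff[of "1/?sl" ?F 0] sl by simp
  qed
  hence sint: "set_integrable lborel {0..} (gI lam b)" unfolding set_integrable_def .
  have "integral {0..} (gI lam b) = set_lebesgue_integral lborel {0..} (gI lam b)"
    using set_borel_integral_eq_integral(2)[OF sint] by simp
  also have "\<dots> = (\<integral>x. ?F x \<partial>lborel)" by (simp add: set_lebesgue_integral_def)
  also have "\<dots> = \<bar>1/?sl\<bar> *\<^sub>R (\<integral>x. ?F (0 + (1/?sl) * x) \<partial>lborel)"
    by (rule lborel_integral_real_affine) (use sl in simp)
  also have "\<dots> = (1/?sl) * (\<integral>x. indicator {0..} x *\<^sub>R ((x * exp (Af lam b x)) / ?sl) \<partial>lborel)"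
    using eqF sl by simp
  also have "\<dots> = (1/lam) * set_lebesgue_integral lborel {0..} (\<lambda>s. s * exp (Af lam b s))"
    using sl lam by (simp add: set_lebesgue_integral_def)
  finally show ?thesis using lam by simp
qed



lemma Af_bound:
  assumes lam: "lam > 0" and b: "0 \<le> b" "b \<le> M" and big: "4*(M+1) \<le> sqrt lam" and s: "s \<ge> 0"
  shows "Af lam b s \<le> (M+1)^2 - s"
proof -
  define sl where "sl = sqrt lam"
  have sl: "sl > 0" using lam by (simp add: sl_def)
  have lam_eq: "lam = sl^2" using lam by (simp add: sl_def)
  define x where "x = s / sl"
  have x: "x \<ge> 0" using s sl by (simp add: x_def)
  have s_eq: "s = sl * x" using sl by (simp add: x_def)
  define L where "L = ln (1 + x)"
  have L0: "L \<ge> 0" using x by (simp add: L_def)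
  have Lx: "L \<le> x" using x by (simp add: L_def ln_add_one_self_le_self)
  have Lq: "L \<le> x - x^2/(2*(1+x))" using ln_upper_q[OF x] by (simp add: L_def)
  have M0: "M \<ge> 0" using b by simp
  have Af_eq: "Af lam b s = (lam + b * sl - 1) * L - lam * x"
    unfolding Af_def L_def sl_def[symmetric] using sl by (simp add: lam_eq s_eq power2_eq_square)
  have "(lam + b * sl - 1) * L \<le> lam * L + (b * sl) * x"
  proof -
    have "(b * sl) * L \<le> (b * sl) * x" using Lx b sl by (intro mult_left_mono) auto
    thus ?thesis using L0 by (simp add: algebra_simps)
  qed
  moreover have "lam * L \<le> lam * (x - x^2/(2*(1+x)))" using Lq lam by (intro mult_left_mono) auto
  ultimately have A1: "Af lam b s \<le> b * s - lam * x^2/(2*(1+x))"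
    unfolding Af_eq using s_eq by (simp add: algebra_simps)
  have lx2: "lam * x^2 = s^2" by (simp add: lam_eq s_eq power_mult_distrib)
  have bs: "b * s \<le> M * s" using b s by (simp add: mult_right_mono)
  show ?thesis
  proof (cases "x \<le> 1")
    case True
    have "s^2/4 \<le> s^2/(2*(1+x))" using True x by (intro divide_left_mono) auto
    moreover have "M * s - s^2/4 \<le> (M+1)^2 - s"
      using zero_le_power2[of "s/2 - (M+1)"] by (simp add: power2_eq_square algebra_simps)
    ultimately show ?thesis using A1 bs lx2 by simp
  next
    case False
    hence x1: "x > 1" by simp
    have "s^2/(4*x) \<le> s^2/(2*(1+x))" using x1 by (intro divide_left_mono) auto
    moreover have "s^2/(4*x) = s * sl / 4" using x1 sl by (simp add: s_eq power2_eq_square)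
    moreover have "s * sl / 4 \<ge> (M+1) * s" using mult_left_mono[OF big s] by (simp add: sl_def algebra_simps)
    ultimately have "s^2/(2*(1+x)) \<ge> (M+1) * s" by linarith
    moreover have A2: "Af lam b s \<le> b * s - s^2/(2*(1+x))" using A1 lx2 by simp
    moreover have "(M+1)^2 \<ge> 0" by simp
    moreover have "(M+1) * s = M * s + s" by (simp add: algebra_simps)
    ultimately show ?thesis using bs by linarith
  qed
qed

lemma Af_err:
  assumes lam: "lam > 0" and b: "0 \<le> b" and s: "s \<ge> 0"
  shows "\<bar>Af lam b s - (b * s - s^2/2)\<bar> \<le> (s^3/3 + b * s^2/2 + s) * inverse (sqrt lam)"
proof -
  define sl where "sl = sqrt lam"
  have sl: "sl > 0" using lam by (simp add: sl_def)
  have lam_eq: "lam = sl^2" using lam by (simp add: sl_def)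
  define x where "x = s / sl"
  have x: "x \<ge> 0" using s sl by (simp add: x_def)
  have s_eq: "s = sl * x" using sl by (simp add: x_def)
  define L where "L = ln (1 + x)"
  have L0: "L \<ge> 0" using x by (simp add: L_def)
  have Lx: "L \<le> x" using x by (simp add: L_def ln_add_one_self_le_self)
  have L2: "x - x^2/2 \<le> L" using ln_lower2[OF x] by (simp add: L_def)
  have L3: "L \<le> x - x^2/2 + x^3/3" using ln_upper3[OF x] by (simp add: L_def)
  have Af_eq: "Af lam b s - (b * s - s^2/2) = sl^2 * (L - x + x^2/2) + (b * sl) * (L - x) - L"
    unfolding Af_def L_def sl_def[symmetric] using sl
    by (simp add: lam_eq s_eq power2_eq_square algebra_simps)
  have t1: "0 \<le> sl^2 * (L - x + x^2/2)" using L2 by simp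
  have t1': "sl^2 * (L - x + x^2/2) \<le> sl^2 * (x^3/3)" using L3 by (intro mult_left_mono) auto
  have t2: "(b * sl) * (L - x) \<le> 0" using Lx b sl by (simp add: mult_nonneg_nonpos)
  have t2': "(b * sl) * (-(x^2/2)) \<le> (b * sl) * (L - x)" using L2 b sl by (intro mult_left_mono) auto
  have "\<bar>Af lam b s - (b * s - s^2/2)\<bar> \<le> sl^2 * (x^3/3) + (b * sl) * (x^2/2) + x"
    unfolding Af_eq using t1 t1' t2 t2' L0 Lx by (simp add: abs_le_iff)
  also have "\<dots> = (s^3/3 + b * s^2/2 + s) * inverse (sqrt lam)"
    using sl by (simp add: sl_def[symmetric] s_eq field_simps power2_eq_square power3_eq_cube)
  finally show ?thesis .
qed

lemma inv_sqrt_lim: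
  assumes "filterlim lam at_top sequentially"
  shows "(\<lambda>k. inverse (sqrt (lam k))) \<longlonglongrightarrow> 0"
proof -
  have "filterlim (\<lambda>k. sqrt (lam k)) at_top sequentially"
    by (rule filterlim_compose[OF sqrt_at_top assms])
  thus ?thesis by (rule tendsto_inverse_0_at_top)
qed

lemma Af_lim:
  assumes lam: "filterlim lam at_top sequentially" and b: "\<And>k. b k \<ge> 0" "b \<longlonglongrightarrow> \<beta>" and s: "s \<ge> 0"
  shows "(\<lambda>k. Af (lam k) (b k) s) \<longlonglongrightarrow> \<beta> * s - s^2/2"
proof -
  have ev: "eventually (\<lambda>k. lam k > 0) sequentially"
    using lam by (simp add: filterlim_at_top_dense)
  have "(\<lambda>k. Af (lam k) (b k) s - (b k * s - s^2/2)) \<longlonglongrightarrow> 0"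
  proof (rule Lim_null_comparison)
    show "eventually (\<lambda>k. norm (Af (lam k) (b k) s - (b k * s - s^2/2)) \<le> (s^3/3 + b k * s^2/2 + s) * inverse (sqrt (lam k))) sequentially"
      using ev by eventually_elim (use Af_err b s in auto)
    show "(\<lambda>k. (s^3/3 + b k * s^2/2 + s) * inverse (sqrt (lam k))) \<longlonglongrightarrow> 0"
    proof -
      have "(\<lambda>k. s^3/3 + b k * s^2/2 + s) \<longlonglongrightarrow> s^3/3 + \<beta> * s^2/2 + s"
        by (intro tendsto_intros b(2)) auto
      from tendsto_mult[OF this inv_sqrt_lim[OF lam]] show ?thesis by simp
    qed
  qed
  hence "(\<lambda>k. (Af (lam k) (b k) s - (b k * s - s^2/2)) + (b k * s - s^2/2)) \<longlonglongrightarrow> 0 + (\<beta> * s - s^2/2)"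
    by (intro tendsto_intros b)
  thus ?thesis by simp
qed



lemma Af_dom:
  assumes lam: "lam > 0" and b: "0 \<le> b" "b \<le> M" and big: "4*(M+1) \<le> sqrt lam"
  shows "norm (indicator {0..} x *\<^sub>R (x * exp (Af lam b x))) \<le> exp ((M+1)^2) * (indicator {0..} x *\<^sub>R (x^1 * exp (-x)))"
proof (cases "x \<ge> 0")
  case True
  have "exp (Af lam b x) \<le> exp ((M+1)^2 + (-x))"
    using Af_bound[OF lam b big True] by simp
  also have "\<dots> = exp ((M+1)^2) * exp (-x)" by (rule exp_add)
  finally have "x * exp (Af lam b x) \<le> x * (exp ((M+1)^2) * exp (-x))"
    using True by (intro mult_left_mono) auto
  thus ?thesis using True by (simp add: mult_ac)
qed simp

lemma meas_Af: "(\<lambda>x. indicator {0..} x *\<^sub>R (x * exp (Af lam b x))) \<in> borel_measurable lborel"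
  unfolding Af_def by measurable

lemma Qconv:
  assumes lam: "filterlim lam at_top sequentially" and b: "\<And>k. b k \<ge> 0" "b \<longlonglongrightarrow> \<beta>"
  shows "(\<lambda>k. lam k * integral {0..} (gI (lam k) (b k))) \<longlonglongrightarrow> 1 + \<beta> * Wf \<beta>"
proof -
  define M where "M = \<beta> + 1"
  have evb: "eventually (\<lambda>k. b k \<le> M) sequentially"
  proof -
    have "eventually (\<lambda>k. dist (b k) \<beta> < 1) sequentially"
      using b(2) by (rule tendstoD) simp
    thus ?thesis by eventually_elim (auto simp: M_def dist_real_def)
  qed
  have evl: "eventually (\<lambda>k. lam k \<ge> max 1 ((4*(M+1))^2)) sequentially"
    using lam unfolding filterlim_at_top by blast
  have good: "eventually (\<lambda>k. lam k > 0 \<and> b k \<le> M \<and> 4*(M+1) \<le> sqrt (lam k)) sequentially"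
    using evb evl
  proof eventually_elim
    case (elim k)
    have "sqrt ((4*(M+1))^2) \<le> sqrt (lam k)" using elim by (intro real_sqrt_le_mono) auto
    moreover have "M + 1 \<ge> 0" using b(1)[of k] elim by simp
    ultimately show ?case using elim by simp
  qed
  let ?s = "\<lambda>k x. indicator {0..} x *\<^sub>R (x * exp (Af (lam k) (b k) x))"
  let ?w = "\<lambda>x. exp ((M+1)^2) * (indicator {0..} x *\<^sub>R (x^1 * exp (-x)))"
  have intw: "integrable lborel ?w"
    using int_expm[of 1] unfolding set_integrable_def by (rule integrable_mult_right)
  have eq: "eventually (\<lambda>k. lam k * integral {0..} (gI (lam k) (b k)) = integral\<^sup>L lborel (?s k)) sequentially"
    using good
  proof eventually_elim
    case (elim k)
    have "set_integrable lborel {0..} (\<lambda>x. x * exp (Af (lam k) (b k) x))"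
      unfolding set_integrable_def
    proof (rule Bochner_Integration.integrable_bound[OF intw meas_Af], rule AE_I2)
      fix x :: real
      show "norm (?s k x) \<le> norm (?w x)"
      proof (cases "x \<ge> 0")
        case True
        have "norm (?s k x) \<le> ?w x" using Af_dom[of "lam k" "b k" M x] elim b(1)[of k] by simp
        also have "\<dots> \<le> norm (?w x)" by simp
        finally show ?thesis .
      qed (simp add: indicator_def)
    qed
    from Q_eq[OF _ this] elim show ?case by (simp add: set_lebesgue_integral_def)
  qed
  have "(\<lambda>k. integral\<^sup>L lborel (?s k)) \<longlonglongrightarrow> integral\<^sup>L lborel (\<lambda>x. indicator {0..} x *\<^sub>R (x * exp (\<beta> * x - x^2/2)))"
  proof (rule dct_ev[where w="?w"])
    show "AE x in lborel. (\<lambda>i. ?s i x) \<longlonglongrightarrow> indicator {0..} x *\<^sub>R (x * exp (\<beta> * x - x^2/2))"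
    proof (rule AE_I2)
      fix x :: real
      show "(\<lambda>i. ?s i x) \<longlonglongrightarrow> indicator {0..} x *\<^sub>R (x * exp (\<beta> * x - x^2/2))"
      proof (cases "x \<ge> 0")
        case True
        show ?thesis by (intro tendsto_intros Af_lim[OF lam b True])
      qed simp
    qed
    show "eventually (\<lambda>i. AE x in lborel. norm (?s i x) \<le> ?w x) sequentially"
      using good
    proof eventually_elim
      case (elim k)
      show ?case
      proof (rule AE_I2)
        fix x :: real
        show "norm (?s k x) \<le> ?w x" using Af_dom[of "lam k" "b k" M x] elim b(1)[of k] by simp
      qed
    qed
    show "(\<lambda>x. indicator {0..} x *\<^sub>R (x * exp (\<beta> * x - x^2/2))) \<in> borel_measurable lborel"
      by measurable
    show "\<And>i. ?s i \<in> borel_measurable lborel" by (rule meas_Af)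
    show "integrable lborel ?w" by (rule intw)
  qed
  also have "integral\<^sup>L lborel (\<lambda>x. indicator {0..} x *\<^sub>R (x * exp (\<beta> * x - x^2/2))) = 1 + \<beta> * Wf \<beta>"
    using Tlemma[of \<beta>] by (simp add: set_lebesgue_integral_def)
  finally have lim: "(\<lambda>k. integral\<^sup>L lborel (?s k)) \<longlonglongrightarrow> 1 + \<beta> * Wf \<beta>" .
  show ?thesis using tendsto_cong[OF eq] lim by blast
qed



lemma UB_form:
  assumes lam: "lam > 0" and b: "b \<ge> 0"
  defines "u \<equiv> b / sqrt lam"
  shows "UB b lam = inverse (1/(1+u) + b / sqrt (1+u) *
            (Wf (sqrt (2*lam*((1+u)*ln(1+u) - u))) + 2/(3*(sqrt lam * sqrt (1+u)))))"
proof -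
  define sl where "sl = sqrt lam"
  have sl: "sl > 0" using lam by (simp add: sl_def)
  have lam_eq: "lam = sl^2" using lam by (simp add: sl_def)
  have u0: "u \<ge> 0" using b lam by (simp add: u_def)
  have b_eq: "b = sl * u" using sl by (simp add: u_def sl_def[symmetric])
  define n where "n = lam + b * sqrt lam"
  have n_eq: "n = lam * (1 + u)" unfolding n_def sl_def[symmetric] by (simp add: b_eq lam_eq power2_eq_square algebra_simps)
  have rho: "lam / n = 1/(1+u)" using lam u0 by (simp add: n_eq)
  have sqn: "sqrt n = sl * sqrt (1+u)" by (simp add: n_eq real_sqrt_mult sl_def)
  have sq1: "sqrt (1+u) > 0" using u0 by simp
  have gam: "(n - lam) / sqrt n = b / sqrt (1+u)"
    unfolding sqn using sl sq1 by (simp add: n_eq b_eq lam_eq power2_eq_square field_simps)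
  have lnr: "ln (1/(1+u)) = - ln (1+u)" using u0 by (simp add: ln_div)
  have aa: "- 2 * n * (1 - lam / n + ln (lam / n)) = 2*lam*((1+u)*ln(1+u) - u)"
    unfolding rho lnr using u0 lam by (simp add: n_eq field_simps)
  show ?thesis
    apply (simp only: UB_def Let_def n_def[symmetric])
    apply (simp only: aa gam)
    apply (simp only: rho PhiW sqn sl_def)
    done
qed



lemma a2_bound:
  assumes lam: "lam > 0" and b: "b \<ge> 0"
  defines "u \<equiv> b / sqrt lam"
  shows "\<bar>2*lam*((1+u)*ln(1+u) - u) - b^2\<bar> \<le> b^2 * (u + u^2)"
proof -
  have u0: "u \<ge> 0" using b lam by (simp add: u_def)
  have bu: "b^2 = lam * u^2" using lam by (simp add: u_def power_divide)
  define L where "L = ln (1+u)"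
  have L2: "u - u^2/2 \<le> L" using ln_lower2[OF u0] by (simp add: L_def)
  have L3: "L \<le> u - u^2/2 + u^3/3" using ln_upper3[OF u0] by (simp add: L_def)
  have lo: "(1+u)*(u - u^2/2) \<le> (1+u)*L" using L2 u0 by (intro mult_left_mono) auto
  have hi: "(1+u)*L \<le> (1+u)*(u - u^2/2 + u^3/3)" using L3 u0 by (intro mult_left_mono) auto
  have e1: "(1+u)*(u - u^2/2) = u + (u^2/2 - u^3/2)" by (simp add: field_simps power2_eq_square power3_eq_cube)
  have e2: "(1+u)*(u - u^2/2 + u^3/3) = u + (u^2/2 - u^3/6 + u^4/3)"
    by (simp add: field_simps power2_eq_square power3_eq_cube power4_eq_xxxx)
  have lo1: "u^2/2 - u^3/2 \<le> (1+u)*L - u" using lo e1 by linarith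
  have hi1: "(1+u)*L - u \<le> u^2/2 - u^3/6 + u^4/3" using hi e2 by linarith
  have lo2: "lam * (u^2/2 - u^3/2) \<le> lam * ((1+u)*L - u)"
    using lo1 lam by (intro mult_left_mono) auto
  have hi2: "lam * ((1+u)*L - u) \<le> lam * (u^2/2 - u^3/6 + u^4/3)"
    using hi1 lam by (intro mult_left_mono) auto
  have p3: "lam * u^3 \<ge> 0" "lam * u^4 \<ge> 0" using lam u0 by auto
  have "\<bar>2*lam*((1+u)*L - u) - lam * u^2\<bar> \<le> lam * u^3 + lam * u^4"
    using lo2 hi2 p3 by (simp add: abs_le_iff algebra_simps)
  also have "\<dots> = b^2 * (u + u^2)" unfolding bu by (simp add: algebra_simps power2_eq_square power3_eq_cube power4_eq_xxxx)
  finally show ?thesis by (simp add: L_def bu mult.assoc)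
qed



lemma UBconv:
  assumes lam: "filterlim lam at_top sequentially" and b: "\<And>k. b k \<ge> 0" "b \<longlonglongrightarrow> \<beta>"
  shows "(\<lambda>k. UB (b k) (lam k)) \<longlonglongrightarrow> inverse (1 + \<beta> * Wf \<beta>)"
proof -
  have beta0: "\<beta> \<ge> 0" using b by (intro LIMSEQ_le_const[OF b(2)]) auto
  have ev: "eventually (\<lambda>k. lam k > 0) sequentially"
    using lam by (simp add: filterlim_at_top_dense)
  define u where "u k = b k / sqrt (lam k)" for k
  have isq: "(\<lambda>k. inverse (sqrt (lam k))) \<longlonglongrightarrow> 0" by (rule inv_sqrt_lim[OF lam])
  have u: "u \<longlonglongrightarrow> 0"
  proof -
    have "(\<lambda>k. b k * inverse (sqrt (lam k))) \<longlonglongrightarrow> \<beta> * 0" by (intro tendsto_intros b(2) isq)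
    thus ?thesis by (simp add: u_def[abs_def] divide_inverse)
  qed
  define q where "q k = 2 * lam k * ((1 + u k) * ln (1 + u k) - u k)" for k
  have q: "q \<longlonglongrightarrow> \<beta>^2"
  proof -
    have "(\<lambda>k. q k - (b k)^2) \<longlonglongrightarrow> 0"
    proof (rule Lim_null_comparison)
      show "eventually (\<lambda>k. norm (q k - (b k)^2) \<le> (b k)^2 * (u k + (u k)^2)) sequentially"
        using ev by eventually_elim (use a2_bound b(1) in \<open>auto simp: q_def u_def\<close>)
      show "(\<lambda>k. (b k)^2 * (u k + (u k)^2)) \<longlonglongrightarrow> 0"
        using tendsto_mult[OF tendsto_power[OF b(2), of 2] tendsto_add[OF u tendsto_power[OF u, of 2]]] by simp
    qed
    hence "(\<lambda>k. (q k - (b k)^2) + (b k)^2) \<longlonglongrightarrow> 0 + \<beta>^2" by (intro tendsto_intros b(2))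
    thus ?thesis by simp
  qed
  have a: "(\<lambda>k. sqrt (q k)) \<longlonglongrightarrow> \<beta>"
    using tendsto_real_sqrt[OF q] beta0 by simp
  have W: "(\<lambda>k. Wf (sqrt (q k))) \<longlonglongrightarrow> Wf \<beta>" by (rule Wcont[OF a])
  have r: "(\<lambda>k. 2/(3*(sqrt (lam k) * sqrt (1 + u k)))) \<longlonglongrightarrow> 0"
  proof -
    have "(\<lambda>k. (2/3) * (inverse (sqrt (lam k)) * inverse (sqrt (1 + u k)))) \<longlonglongrightarrow> (2/3) * (0 * inverse (sqrt (1 + 0)))"
      by (intro tendsto_intros isq u) auto
    thus ?thesis by (simp add: field_simps)
  qed
  have Wpos: "Wf \<beta> > 0" using Wf_mono[OF beta0] Wf_pos by (smt (verit) exp_gt_zero)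
  have D: "(\<lambda>k. 1/(1 + u k) + b k / sqrt (1 + u k) * (Wf (sqrt (q k)) + 2/(3*(sqrt (lam k) * sqrt (1 + u k)))))
      \<longlonglongrightarrow> 1/(1+0) + \<beta> / sqrt (1+0) * (Wf \<beta> + 0)"
    by (intro tendsto_intros u b(2) W r) auto
  have "(\<lambda>k. inverse (1/(1 + u k) + b k / sqrt (1 + u k) * (Wf (sqrt (q k)) + 2/(3*(sqrt (lam k) * sqrt (1 + u k))))))
      \<longlonglongrightarrow> inverse (1/(1+0) + \<beta> / sqrt (1+0) * (Wf \<beta> + 0))"
  proof (rule tendsto_inverse[OF D])
    have "\<beta> * Wf \<beta> \<ge> 0" using Wpos beta0 by simp
    thus "1/(1+0) + \<beta> / sqrt (1+0) * (Wf \<beta> + 0) \<noteq> (0::real)" by simp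
  qed
  moreover have "eventually (\<lambda>k. UB (b k) (lam k) = inverse (1/(1 + u k) + b k / sqrt (1 + u k) * (Wf (sqrt (q k)) + 2/(3*(sqrt (lam k) * sqrt (1 + u k)))))) sequentially"
    using ev by eventually_elim (use UB_form b(1) in \<open>simp add: u_def q_def\<close>)
  ultimately show ?thesis using tendsto_cong by (simp add: tendsto_cong)
qed

lemma caseC:
  assumes lam: "filterlim lam at_top sequentially" and b: "\<And>k. b k \<ge> 0" "b \<longlonglongrightarrow> \<beta>"
  shows "(\<lambda>k. UB (b k) (lam k) - erlangC_tilde (b k) (lam k)) \<longlonglongrightarrow> 0"
proof -
  have beta0: "\<beta> \<ge> 0" using b by (intro LIMSEQ_le_const[OF b(2)]) auto
  have Wpos: "Wf \<beta> > 0" using Wf_mono[OF beta0] Wf_pos by (smt (verit) exp_gt_zero)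
  define T where "T = 1 + \<beta> * Wf \<beta>"
  have T1: "T \<ge> 1" using Wpos beta0 by (simp add: T_def)
  have et: "erlangC_tilde (b k) (lam k) = min 1 (inverse (lam k * integral {0..} (gI (lam k) (b k))))" for k
    unfolding erlangC_tilde_def erlangC_bar_def gI_def by simp
  have "(\<lambda>k. min 1 (inverse (lam k * integral {0..} (gI (lam k) (b k))))) \<longlonglongrightarrow> min 1 (inverse T)"
    unfolding T_def by (intro tendsto_intros Qconv[OF lam b]) (use T1 T_def in auto)
  moreover have "min 1 (inverse T) = inverse T" using T1 by (simp add: inverse_le_1_iff)
  ultimately have A: "(\<lambda>k. erlangC_tilde (b k) (lam k)) \<longlonglongrightarrow> inverse T" by (simp add: et)
  have "(\<lambda>k. UB (b k) (lam k) - erlangC_tilde (b k) (lam k)) \<longlonglongrightarrow> inverse T - inverse T"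
    by (intro tendsto_intros A) (use UBconv[OF lam b] T_def in simp)
  thus ?thesis by simp
qed



lemma gI_lower:
  assumes lam: "lam \<ge> 1" and b: "b \<ge> 0" and t: "1/(2 * sqrt lam) \<le> t" "t \<le> 1/sqrt lam"
  shows "gI lam b t \<ge> 1/(2 * sqrt lam) * exp (b/4 - 3/2)"
proof -
  define sl where "sl = sqrt lam"
  have sl1: "sl \<ge> 1" using lam by (simp add: sl_def)
  have lam_eq: "lam = sl^2" using lam by (simp add: sl_def)
  have c0: "1/(2 * sl) > 0" using sl1 by simp
  have d1: "1/sl \<le> 1" using sl1 by simp
  have t0: "t > 0" using t c0 unfolding sl_def by linarith
  have t1: "t \<le> 1" using t d1 unfolding sl_def by linarith
  have tsl: "t * sl \<le> 1" using t sl1 by (simp add: sl_def[symmetric] field_simps)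
  have tsl2: "t * sl \<ge> 1/2" using t sl1 by (simp add: sl_def[symmetric] field_simps)
  define L where "L = ln (1 + t)"
  have L2: "t - t^2/2 \<le> L" using ln_lower2[of t] t0 by (simp add: L_def)
  have "t * t \<le> t" using t0 t1 by (intro mult_left_le_one_le) auto
  hence Lh: "t/2 \<le> L" using L2 by (simp add: power2_eq_square)
  have lt2: "lam * t^2 \<le> 1"
  proof -
    have "lam * t^2 = (t * sl)^2" by (simp add: lam_eq power_mult_distrib)
    also have "\<dots> \<le> 1" using tsl t0 sl1 by (simp add: power_le_one)
    finally show ?thesis .
  qed
  have E1: "(lam - 1) * L \<ge> (lam - 1) * (t - t^2/2)" using L2 lam by (intro mult_left_mono) auto
  have E1': "(lam - 1) * (t - t^2/2) - lam * t \<ge> -3/2"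
  proof -
    have "(lam - 1) * (t - t^2/2) - lam * t = - t - lam * t^2/2 + t^2/2" by (simp add: field_simps)
    moreover have "t^2 \<ge> 0" by simp
    ultimately show ?thesis using t1 lt2 by linarith
  qed
  have E2: "(b * sl) * L \<ge> (b * sl) * (t/2)" using Lh b sl1 by (intro mult_left_mono) auto
  have E2': "(b * sl) * (t/2) \<ge> b/4"
  proof -
    have "(b * sl) * (t/2) = b * (t * sl) / 2" by (simp add: algebra_simps)
    moreover have "b * (t * sl) \<ge> b * (1/2)" using tsl2 b by (intro mult_left_mono) auto
    ultimately show ?thesis by (simp add: mult_ac)
  qed
  have E: "(lam + b * sl - 1) * L - lam * t \<ge> b/4 - 3/2"
  proof -
    have "(lam + b * sl - 1) * L - lam * t = ((lam - 1) * L - lam * t) + (b * sl) * L" by (simp add: algebra_simps)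
    thus ?thesis using E1 E1' E2 E2' by linarith
  qed
  have "gI lam b t = t * exp ((lam + b * sl - 1) * L - lam * t)"
  proof -
    have "(1 + t) powr (lam + b * sl - 1) = exp ((lam + b * sl - 1) * L)"
      using t0 by (simp add: powr_def L_def)
    moreover have "exp (- lam * t) * exp ((lam + b * sl - 1) * L) = exp ((lam + b * sl - 1) * L - lam * t)"
      by (subst exp_add[symmetric]) simp
    ultimately show ?thesis unfolding gI_def sl_def[symmetric] by (simp add: mult.assoc)
  qed
  also have "\<dots> \<ge> 1/(2 * sl) * exp (b/4 - 3/2)"
  proof (rule mult_mono)
    show "1/(2 * sl) \<le> t" using t by (simp add: sl_def)
  qed (use E t0 in auto)
  finally show ?thesis by (simp add: sl_def)
qed



lemma alpha_tail:
  assumes lam: "lam \<ge> 1" and b: "b \<ge> 0"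
  shows "0 \<le> erlangC_tilde b lam \<and> erlangC_tilde b lam \<le> 4 * exp (3/2 - b/4)"
proof -
  have et: "erlangC_tilde b lam = min 1 (inverse (lam * integral {0..} (gI lam b)))"
    unfolding erlangC_tilde_def erlangC_bar_def gI_def by simp
  show ?thesis
  proof (cases "gI lam b integrable_on {0..}")
    case False
    thus ?thesis by (simp add: et not_integrable_integral)
  next
    case True
    define sl where "sl = sqrt lam"
    have sl1: "sl \<ge> 1" using lam by (simp add: sl_def)
    have lam_eq: "lam = sl^2" using lam by (simp add: sl_def)
    define c where "c = 1/(2 * sl)"
    define d where "d = 1/sl"
    have cd: "0 \<le> c" "c \<le> d" using sl1 by (auto simp: c_def d_def field_simps)
    have gnn: "\<And>t. t \<ge> 0 \<Longrightarrow> gI lam b t \<ge> 0" by (simp add: gI_def)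
    have cont: "continuous_on {c..d} (gI lam b)"
      unfolding gI_def using cd by (intro continuous_intros) auto
    have "integral {c..d} (\<lambda>t. c * exp (b/4 - 3/2)) \<le> integral {c..d} (gI lam b)"
    proof (rule integral_le)
      show "(\<lambda>t. c * exp (b/4 - 3/2)) integrable_on {c..d}" by (intro integrable_continuous_interval continuous_intros)
      show "gI lam b integrable_on {c..d}" by (rule integrable_continuous_interval[OF cont])
      fix t assume "t \<in> {c..d}"
      thus "c * exp (b/4 - 3/2) \<le> gI lam b t"
        using gI_lower[OF lam b, of t] by (simp add: c_def d_def sl_def)
    qed
    also have "\<dots> \<le> integral {0..} (gI lam b)"
    proof (rule integral_subset_le)
      show "{c..d} \<subseteq> {0..}" using cd by auto
      show "gI lam b integrable_on {c..d}" by (rule integrable_continuous_interval[OF cont])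
    qed (use True gnn in auto)
    finally have I: "(d - c) * (c * exp (b/4 - 3/2)) \<le> integral {0..} (gI lam b)"
      using cd by (simp add: mult_ac)
    have eqv: "lam * ((d - c) * (c * exp (b/4 - 3/2))) = exp (b/4 - 3/2) / 4"
      using sl1 by (simp add: lam_eq c_def d_def field_simps power2_eq_square)
    have m: "lam * ((d - c) * (c * exp (b/4 - 3/2))) \<le> lam * integral {0..} (gI lam b)"
      by (rule mult_left_mono[OF I]) (use lam in simp)
    have X: "exp (b/4 - 3/2) / 4 \<le> lam * integral {0..} (gI lam b)"
      using eqv m by linarith
    have pos: "exp (b/4 - 3/2) / 4 > 0" by simp
    have "inverse (lam * integral {0..} (gI lam b)) \<le> inverse (exp (b/4 - 3/2) / 4)"
      using X pos by (intro le_imp_inverse_le) auto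
    also have "\<dots> = 4 * exp (3/2 - b/4)"
    proof -
      have e1: "exp (3/2 - b/4) = inverse (exp (b/4 - 3/2))" using exp_minus[of "b/4 - 3/2"] by simp
      show ?thesis unfolding e1 inverse_divide by (rule divide_inverse)
    qed
    finally have up: "inverse (lam * integral {0..} (gI lam b)) \<le> 4 * exp (3/2 - b/4)" .
    have Qpos: "lam * integral {0..} (gI lam b) > 0" using X pos by linarith
    have nn: "inverse (lam * integral {0..} (gI lam b)) \<ge> 0"
      using Qpos by (simp only: inverse_nonnegative_iff_nonnegative less_imp_le)
    have "0 \<le> min 1 (inverse (lam * integral {0..} (gI lam b)))" using nn by simp
    moreover have "min 1 (inverse (lam * integral {0..} (gI lam b))) \<le> 4 * exp (3/2 - b/4)"
      using min.cobounded2 up by (rule order_trans)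
    ultimately show ?thesis unfolding et by simp
  qed
qed



lemma xlnx_nonneg: fixes u :: real assumes "u \<ge> 0" shows "(1+u)*ln(1+u) - u \<ge> 0"
proof (rule nonneg_from_deriv[where F="\<lambda>u. (1+u)*ln(1+u) - u" and F'="\<lambda>u. ln (1+u)"])
  fix x :: real assume x: "x \<ge> 0"
  show "((\<lambda>u. (1+u)*ln(1+u) - u) has_real_derivative ln (1+x)) (at x)"
    using x by (auto intro!: derivative_eq_intros)
qed (use assms in auto)

lemma gam_lower:
  assumes lam: "lam > 0" and B: "B \<ge> 0" "B \<le> b" "B \<le> sqrt lam"
  shows "B/2 \<le> b / sqrt (1 + b / sqrt lam)"
proof -
  define sl where "sl = sqrt lam"
  have sl: "sl > 0" using lam by (simp add: sl_def)
  define u where "u = b / sl"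
  have b0: "b \<ge> 0" using B by simp
  have u0: "u \<ge> 0" using b0 sl by (simp add: u_def)
  have "B^2 * u \<le> B * b"
  proof -
    have "B / sl \<le> 1" using B sl by (simp add: sl_def[symmetric])
    hence "B * (B / sl) * b \<le> B * 1 * b" using B b0 by (intro mult_right_mono mult_left_mono) auto
    thus ?thesis by (simp add: u_def power2_eq_square algebra_simps)
  qed
  also have "\<dots> \<le> b * b" using B by (intro mult_right_mono) auto
  finally have h: "B^2 * u \<le> b^2" by (simp add: power2_eq_square)
  have "B^2 \<le> b^2" using B by (intro power_mono) auto
  moreover have "(B/2)^2 * (1 + u) = B^2/4 + (B^2 * u)/4" by (simp add: power_divide field_simps)
  moreover have "b^2 \<ge> 0" by simp
  ultimately have "(B/2)^2 * (1 + u) \<le> b^2" using h by linarith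
  hence "sqrt ((B/2)^2 * (1 + u)) \<le> sqrt (b^2)" by (rule real_sqrt_le_mono)
  hence "B/2 * sqrt (1 + u) \<le> b" using B b0 by (simp add: real_sqrt_mult)
  moreover have "sqrt (1+u) > 0" using u0 by simp
  ultimately show ?thesis by (simp add: u_def sl_def field_simps)
qed

lemma UB_tail:
  assumes lam: "lam > 0" and B: "B > 0" "B \<le> b" "B \<le> sqrt lam"
  shows "0 \<le> UB b lam \<and> UB b lam \<le> 2 / (B * Wf 0)"
proof -
  define u where "u = b / sqrt lam"
  have b0: "b \<ge> 0" using B by simp
  have u0: "u \<ge> 0" using b0 lam by (simp add: u_def)
  define g where "g = b / sqrt (1 + u)"
  have g: "B/2 \<le> g" using gam_lower[OF lam less_imp_le[OF B(1)] B(2,3)] by (simp add: g_def u_def)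
  define a where "a = sqrt (2*lam*((1+u)*ln(1+u) - u))"
  define r where "r = 2/(3*(sqrt lam * sqrt (1+u)))"
  have r0: "r \<ge> 0" using u0 lam by (simp add: r_def)
  have W0: "Wf 0 > 0" using Wf_pos by (smt (verit) exp_gt_zero)
  have Wa: "Wf a \<ge> Wf 0" by (rule Wf_mono) (use xlnx_nonneg[OF u0] lam in \<open>simp add: a_def\<close>)
  have UBe: "UB b lam = inverse (1/(1+u) + g * (Wf a + r))"
    using UB_form[OF lam b0] by (simp add: u_def g_def a_def r_def)
  have "g * Wf 0 \<le> g * (Wf a + r)" using g B Wa r0 by (intro mult_left_mono) auto
  moreover have "1/(1+u) \<ge> 0" using u0 by simp
  ultimately have D: "g * Wf 0 \<le> 1/(1+u) + g * (Wf a + r)" by linarith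
  have gW: "g * Wf 0 > 0" using g B W0 by simp
  have "UB b lam \<le> inverse (g * Wf 0)" unfolding UBe using D gW by (rule le_imp_inverse_le)
  also have "\<dots> \<le> inverse ((B/2) * Wf 0)" using g B W0 by (intro le_imp_inverse_le mult_right_mono) auto
  also have "\<dots> = 2 / (B * Wf 0)" by (simp add: field_simps)
  finally show ?thesis unfolding UBe using D gW by simp
qed



lemma keyK:
  assumes lam: "filterlim lam at_top sequentially" and b: "\<And>k. b k \<ge> 0"
  shows "(\<lambda>k. UB (b k) (lam k) - erlangC_tilde (b k) (lam k)) \<longlonglongrightarrow> 0"
proof (rule ccontr)
  define d where "d k = UB (b k) (lam k) - erlangC_tilde (b k) (lam k)" for k
  assume "\<not> (\<lambda>k. UB (b k) (lam k) - erlangC_tilde (b k) (lam k)) \<longlonglongrightarrow> 0"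
  hence "\<not> d \<longlonglongrightarrow> 0" by (simp add: d_def[abs_def])
  then obtain \<epsilon> :: real where eps: "\<epsilon> > 0" and nev: "\<not> eventually (\<lambda>k. dist (d k) 0 < \<epsilon>) sequentially"
    unfolding tendsto_iff by auto
  have fr: "frequently (\<lambda>k. \<not> dist (d k) 0 < \<epsilon>) sequentially" using nev by (simp add: not_eventually)
  have W0: "Wf 0 > 0" using Wf_pos by (smt (verit) exp_gt_zero)
  have lim1: "((\<lambda>B::real. 4 * exp (3/2 - B/4)) \<longlongrightarrow> 0) at_top" by real_asymp
  have lim2: "((\<lambda>B::real. (2 / Wf 0) * inverse B) \<longlongrightarrow> 0) at_top"
    using tendsto_mult[OF tendsto_const[of "2 / Wf 0"] tendsto_inverse_0_at_top[OF filterlim_ident]] by simp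
  have "((\<lambda>B::real. 4 * exp (3/2 - B/4) + (2 / Wf 0) * inverse B) \<longlongrightarrow> 0 + 0) at_top"
    by (rule tendsto_add[OF lim1 lim2])
  hence "((\<lambda>B::real. 4 * exp (3/2 - B/4) + (2 / Wf 0) * inverse B) \<longlongrightarrow> 0) at_top" by simp
  hence "eventually (\<lambda>B::real. dist (4 * exp (3/2 - B/4) + (2 / Wf 0) * inverse B) 0 < \<epsilon>) at_top"
    using eps by (rule tendstoD)
  moreover have "eventually (\<lambda>B::real. B \<ge> 1) at_top" by (rule eventually_ge_at_top)
  ultimately have "eventually (\<lambda>B::real. B \<ge> 1 \<and> 4 * exp (3/2 - B/4) + (2 / Wf 0) * inverse B < \<epsilon>) at_top"
    by eventually_elim (simp add: dist_real_def abs_less_iff)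
  then obtain N :: real where N: "\<And>B. B \<ge> N \<Longrightarrow> B \<ge> 1 \<and> 4 * exp (3/2 - B/4) + (2 / Wf 0) * inverse B < \<epsilon>"
    unfolding eventually_at_top_linorder by blast
  define B where "B = N"
  have B1: "B \<ge> 1" and Beps: "4 * exp (3/2 - B/4) + (2 / Wf 0) * inverse B < \<epsilon>"
    using N[of N] by (simp_all add: B_def)
  have evl: "eventually (\<lambda>k. lam k \<ge> max 1 (B^2)) sequentially"
    using lam unfolding filterlim_at_top by blast
  have small: "\<bar>d k\<bar> < \<epsilon>" if lk: "lam k \<ge> max 1 (B^2)" and bk: "b k \<ge> B" for k
  proof -
    have l1: "lam k \<ge> 1" using lk by simp
    have sq: "B \<le> sqrt (lam k)"
    proof -
      have "sqrt (B^2) \<le> sqrt (lam k)" using lk by (intro real_sqrt_le_mono) simp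
      thus ?thesis using B1 by simp
    qed
    have at: "0 \<le> erlangC_tilde (b k) (lam k) \<and> erlangC_tilde (b k) (lam k) \<le> 4 * exp (3/2 - b k/4)"
      by (rule alpha_tail[OF l1 b])
    have ut: "0 \<le> UB (b k) (lam k) \<and> UB (b k) (lam k) \<le> 2 / (B * Wf 0)"
      by (rule UB_tail) (use l1 B1 bk sq in auto)
    have e1: "4 * exp (3/2 - b k/4) \<le> 4 * exp (3/2 - B/4)" using bk by simp
    have e2: "2 / (B * Wf 0) = (2 / Wf 0) * inverse B" by (simp add: field_simps)
    have "\<bar>d k\<bar> \<le> 4 * exp (3/2 - B/4) + (2 / Wf 0) * inverse B"
      unfolding d_def abs_le_iff using at ut e1 e2 by linarith
    thus ?thesis using Beps by linarith
  qed
  have "frequently (\<lambda>k. \<not> dist (d k) 0 < \<epsilon> \<and> lam k \<ge> max 1 (B^2)) sequentially"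
    by (rule frequently_eventually_frequently[OF fr evl])
  hence "frequently (\<lambda>k. \<bar>d k\<bar> \<ge> \<epsilon> \<and> b k \<le> B) sequentially"
  proof (rule frequently_elim1)
    fix k assume h: "\<not> dist (d k) 0 < \<epsilon> \<and> lam k \<ge> max 1 (B^2)"
    hence "\<bar>d k\<bar> \<ge> \<epsilon>" by (simp add: dist_real_def)
    moreover have "b k \<le> B"
    proof (rule ccontr)
      assume "\<not> b k \<le> B"
      hence "b k \<ge> B" by simp
      hence "\<bar>d k\<bar> < \<epsilon>" using small h by blast
      thus False using \<open>\<bar>d k\<bar> \<ge> \<epsilon>\<close> by simp
    qed
    ultimately show "\<bar>d k\<bar> \<ge> \<epsilon> \<and> b k \<le> B" by simp
  qed
  hence "infinite {k. \<bar>d k\<bar> \<ge> \<epsilon> \<and> b k \<le> B}"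
    by (simp add: frequently_cofinite[symmetric] cofinite_eq_sequentially)
  then obtain r :: "nat \<Rightarrow> nat" where r: "strict_mono r" "\<And>j. \<bar>d (r j)\<bar> \<ge> \<epsilon> \<and> b (r j) \<le> B"
    using infinite_enumerate by blast
  have "bounded (range (b \<circ> r))"
    unfolding bounded_iff
  proof (intro exI ballI)
    fix x assume "x \<in> range (b \<circ> r)"
    then obtain j where x: "x = b (r j)" by auto
    have "0 \<le> b (r j)" "b (r j) \<le> B" using b r(2)[of j] by auto
    thus "norm x \<le> B" using x by simp
  qed
  then obtain l r2 where r2: "strict_mono (r2 :: nat \<Rightarrow> nat)" "((b \<circ> r) \<circ> r2) \<longlonglongrightarrow> l"
    using bounded_imp_convergent_subsequence by blast
  have sm: "strict_mono (r \<circ> r2)" using r(1) r2(1) by (rule strict_mono_o)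
  have lam': "filterlim (\<lambda>j. lam ((r \<circ> r2) j)) at_top sequentially"
    by (rule filterlim_compose[OF lam filterlim_subseq[OF sm]])
  have "(\<lambda>j. UB ((b \<circ> r \<circ> r2) j) (lam ((r \<circ> r2) j)) - erlangC_tilde ((b \<circ> r \<circ> r2) j) (lam ((r \<circ> r2) j))) \<longlonglongrightarrow> 0"
  proof (rule caseC[OF lam'])
    show "\<And>k. 0 \<le> (b \<circ> r \<circ> r2) k" using b by simp
    show "(b \<circ> r \<circ> r2) \<longlonglongrightarrow> l" using r2(2) by simp
  qed
  hence "(\<lambda>j. d ((r \<circ> r2) j)) \<longlonglongrightarrow> 0" by (simp add: d_def)
  hence "eventually (\<lambda>j. dist (d ((r \<circ> r2) j)) 0 < \<epsilon>) sequentially" using eps by (rule tendstoD)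
  then obtain j where "dist (d ((r \<circ> r2) j)) 0 < \<epsilon>" using eventually_happens by fastforce
  moreover have "\<bar>d (r (r2 j))\<bar> \<ge> \<epsilon>" using r(2) by simp
  ultimately show False by (simp add: dist_real_def)
qed



lemma prod_bound2:
  fixes a e :: "'i \<Rightarrow> real"
  assumes "finite I" "\<And>i. i \<in> I \<Longrightarrow> \<bar>a i\<bar> \<le> 1" "\<And>i. i \<in> I \<Longrightarrow> \<bar>e i\<bar> \<le> 1"
  shows "\<bar>\<Prod>i\<in>I. (a i + e i)\<bar> \<le> 2 ^ card I"
proof -
  have "\<bar>\<Prod>i\<in>I. (a i + e i)\<bar> = (\<Prod>i\<in>I. \<bar>a i + e i\<bar>)" by (rule abs_prod)
  also have "\<dots> \<le> (\<Prod>i\<in>I. 2)"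
  proof (rule prod_mono)
    fix i assume "i \<in> I"
    thus "0 \<le> \<bar>a i + e i\<bar> \<and> \<bar>a i + e i\<bar> \<le> 2" using assms(2,3)[of i] by linarith
  qed
  finally show ?thesis by simp
qed

lemma prod_diff:
  fixes a e :: "'i \<Rightarrow> real"
  assumes "finite I" "\<And>i. i \<in> I \<Longrightarrow> \<bar>a i\<bar> \<le> 1" "\<And>i. i \<in> I \<Longrightarrow> \<bar>e i\<bar> \<le> \<epsilon>" "0 \<le> \<epsilon>" "\<epsilon> \<le> 1"
  shows "\<bar>(\<Prod>i\<in>I. (a i + e i)) - (\<Prod>i\<in>I. a i)\<bar> \<le> real (card I) * 2 ^ card I * \<epsilon>"
  using assms
proof (induction I rule: finite_induct)
  case empty
  thus ?case by simp
next
  case (insert x F)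
  let ?P' = "\<Prod>i\<in>F. (a i + e i)"
  let ?P = "\<Prod>i\<in>F. a i"
  have IH: "\<bar>?P' - ?P\<bar> \<le> real (card F) * 2 ^ card F * \<epsilon>"
    using insert.IH insert.prems by auto
  have e1: "\<And>i. i \<in> F \<Longrightarrow> \<bar>e i\<bar> \<le> 1" using insert.prems by (meson insertCI order_trans)
  have bP': "\<bar>?P'\<bar> \<le> 2 ^ card F"
    by (rule prod_bound2[OF insert.hyps(1)]) (use insert.prems e1 in auto)
  have ax: "\<bar>a x\<bar> \<le> 1" and ex: "\<bar>e x\<bar> \<le> \<epsilon>" using insert.prems by auto
  have "(\<Prod>i\<in>insert x F. (a i + e i)) - (\<Prod>i\<in>insert x F. a i) = e x * ?P' + a x * (?P' - ?P)"
    using insert.hyps by (simp add: algebra_simps)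
  also have "\<bar>\<dots>\<bar> \<le> \<bar>e x\<bar> * \<bar>?P'\<bar> + \<bar>a x\<bar> * \<bar>?P' - ?P\<bar>"
    by (simp add: abs_mult[symmetric] abs_triangle_ineq)
  also have "\<dots> \<le> \<epsilon> * 2 ^ card F + 1 * (real (card F) * 2 ^ card F * \<epsilon>)"
    by (intro add_mono mult_mono ax ex bP' IH) (use insert.prems in auto)
  also have "\<dots> \<le> real (card (insert x F)) * 2 ^ card (insert x F) * \<epsilon>"
    using insert.hyps insert.prems by (simp add: algebra_simps)
  finally show ?case .
qed

lemma alpha_01: assumes "lam > 0" shows "0 \<le> erlangC_tilde b lam \<and> erlangC_tilde b lam \<le> 1"
proof -
  have "integral {0..} (gI lam b) \<ge> 0"
  proof (cases "gI lam b integrable_on {0..}")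
    case True
    thus ?thesis by (rule integral_nonneg) (simp add: gI_def)
  qed (simp add: not_integrable_integral)
  hence "inverse (lam * integral {0..} (gI lam b)) \<ge> 0" using assms by simp
  thus ?thesis unfolding erlangC_tilde_def erlangC_bar_def gI_def[symmetric] by simp
qed



theorem theorem5:
  fixes c :: "'L::finite \<Rightarrow> real \<Rightarrow> real"
    and \<delta> :: real
    and lam0 :: "real^'L"
    and bF bG :: "nat \<Rightarrow> real^'L"
  assumes delta_pos: "\<delta> > 0"
    and lam0_pos: "\<forall>i. lam0 $ i > 0"
    and c_cont: "\<forall>i. continuous_on {0..} (c i)"
    and c_mono: "\<forall>i. strict_mono_on {0..} (c i)"
    and bF_mem: "\<forall>m\<ge>1. bF m \<in> nonneg_orthant"
    and bF_min: "\<forall>m\<ge>1. \<forall>\<beta>\<in>nonneg_orthant. f_obj c \<delta> lam0 m (bF m) \<le> f_obj c \<delta> lam0 m \<beta>"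
    and bG_mem: "\<forall>m\<ge>1. bG m \<in> nonneg_orthant"
    and bG_min: "\<forall>m\<ge>1. \<forall>\<beta>\<in>nonneg_orthant. g_obj c \<delta> lam0 m (bG m) \<le> g_obj c \<delta> lam0 m \<beta>"
  shows "(\<lambda>m. f_obj c \<delta> lam0 m (bG m) - f_obj c \<delta> lam0 m (bF m)) \<longlonglongrightarrow> 0"
proof -
  define C where "C = real CARD('L) * 2 ^ CARD('L)"
  have C0: "C \<ge> 0" by (simp add: C_def)
  define bF' where "bF' m = (if m \<ge> 1 then bF m else 0)" for m
  define bG' where "bG' m = (if m \<ge> 1 then bG m else 0)" for m
  have bF'nn: "bF' m $ i \<ge> 0" for m i using bF_mem by (auto simp: bF'_def nonneg_orthant_def)
  have bG'nn: "bG' m $ i \<ge> 0" for m i using bG_mem by (auto simp: bG'_def nonneg_orthant_def)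
  define lamS where "lamS i m = real m * lam0 $ i" for i m
  have lamS: "filterlim (lamS i) at_top sequentially" for i
    unfolding lamS_def[abs_def]
    by (rule filterlim_at_top_mult_tendsto_pos[OF tendsto_const]) (use lam0_pos filterlim_real_sequentially in auto)
  define eF where "eF i m = UB (bF' m $ i) (lamS i m) - erlangC_tilde (bF' m $ i) (lamS i m)" for i m
  define eG where "eG i m = UB (bG' m $ i) (lamS i m) - erlangC_tilde (bG' m $ i) (lamS i m)" for i m
  have eF: "eF i \<longlonglongrightarrow> 0" for i
    unfolding eF_def[abs_def] by (rule keyK[OF lamS]) (rule bF'nn)
  have eG: "eG i \<longlonglongrightarrow> 0" for i
    unfolding eG_def[abs_def] by (rule keyK[OF lamS]) (rule bG'nn)
  define E where "E m = (\<Sum>i\<in>UNIV. \<bar>eF i m\<bar>) + (\<Sum>i\<in>UNIV. \<bar>eG i m\<bar>)" for m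
  have E: "E \<longlonglongrightarrow> 0"
  proof -
    have "(\<lambda>m. (\<Sum>i\<in>UNIV. \<bar>eF i m\<bar>) + (\<Sum>i\<in>UNIV. \<bar>eG i m\<bar>)) \<longlonglongrightarrow> (\<Sum>i\<in>(UNIV::'L set). \<bar>0\<bar>) + (\<Sum>i\<in>(UNIV::'L set). \<bar>0\<bar>)"
      by (intro tendsto_add tendsto_sum tendsto_rabs eF eG)
    thus ?thesis by (simp add: E_def[abs_def])
  qed
  have E0: "E m \<ge> 0" for m by (simp add: E_def sum_nonneg)
  have key: "\<bar>f_obj c \<delta> lam0 m \<beta> - g_obj c \<delta> lam0 m \<beta>\<bar> \<le> \<delta> * (C * E m)"
    if m1: "m \<ge> 1" and hb: "\<And>i. \<bar>UB (\<beta> $ i) (lamS i m) - erlangC_tilde (\<beta> $ i) (lamS i m)\<bar> \<le> E m"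
      and E1: "E m \<le> 1" for m \<beta>
  proof -
    define a where "a i = 1 - erlangC_tilde (\<beta> $ i) (lamS i m)" for i
    define e where "e i = erlangC_tilde (\<beta> $ i) (lamS i m) - UB (\<beta> $ i) (lamS i m)" for i
    have lpos: "lamS i m > 0" for i using m1 lam0_pos by (simp add: lamS_def)
    have a1: "\<bar>a i\<bar> \<le> 1" for i using alpha_01[OF lpos[of i], of "\<beta> $ i"] by (simp add: a_def)
    have e1: "\<bar>e i\<bar> \<le> E m" for i using hb[of i] by (simp add: e_def abs_minus_commute)
    have pd: "\<bar>(\<Prod>i\<in>UNIV. (a i + e i)) - (\<Prod>i\<in>UNIV. a i)\<bar> \<le> C * E m"
      using prod_diff[of UNIV a e "E m"] a1 e1 E0[of m] E1 by (simp add: C_def)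
    have "f_obj c \<delta> lam0 m \<beta> - g_obj c \<delta> lam0 m \<beta> = \<delta> * ((\<Prod>i\<in>UNIV. (a i + e i)) - (\<Prod>i\<in>UNIV. a i))"
      unfolding f_obj_def g_obj_def a_def e_def lamS_def by (simp add: algebra_simps)
    hence "\<bar>f_obj c \<delta> lam0 m \<beta> - g_obj c \<delta> lam0 m \<beta>\<bar> = \<delta> * \<bar>(\<Prod>i\<in>UNIV. (a i + e i)) - (\<Prod>i\<in>UNIV. a i)\<bar>"
      using delta_pos by (simp add: abs_mult)
    also have "\<dots> \<le> \<delta> * (C * E m)" using pd delta_pos by (intro mult_left_mono) auto
    finally show ?thesis .
  qed
  have evE: "eventually (\<lambda>m. m \<ge> 1 \<and> E m \<le> 1) sequentially"
  proof -
    have "eventually (\<lambda>m. dist (E m) 0 < 1) sequentially" using E by (rule tendstoD) simp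
    moreover have "eventually (\<lambda>m. m \<ge> (1::nat)) sequentially" by (rule eventually_ge_at_top)
    ultimately show ?thesis by eventually_elim (simp add: dist_real_def)
  qed
  show ?thesis
  proof (rule tendsto_sandwich[where f="\<lambda>_. 0" and h="\<lambda>m. 2 * (\<delta> * (C * E m))"])
    show "eventually (\<lambda>m. 0 \<le> f_obj c \<delta> lam0 m (bG m) - f_obj c \<delta> lam0 m (bF m)) sequentially"
      using evE
    proof eventually_elim
      case (elim m)
      thus ?case using bF_min bG_mem by auto
    qed
    show "eventually (\<lambda>m. f_obj c \<delta> lam0 m (bG m) - f_obj c \<delta> lam0 m (bF m) \<le> 2 * (\<delta> * (C * E m))) sequentially"
      using evE
    proof eventually_elim
      case (elim m)
      hence m1: "m \<ge> 1" and E1: "E m \<le> 1" by auto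
      have hF: "\<bar>UB (bF m $ i) (lamS i m) - erlangC_tilde (bF m $ i) (lamS i m)\<bar> \<le> E m" for i
      proof -
        have s1: "\<bar>eF i m\<bar> \<le> (\<Sum>i\<in>UNIV. \<bar>eF i m\<bar>)" by (rule member_le_sum) auto
        have s2: "(\<Sum>i\<in>UNIV. \<bar>eG i m\<bar>) \<ge> 0" by (simp add: sum_nonneg)
        have s3: "eF i m = UB (bF m $ i) (lamS i m) - erlangC_tilde (bF m $ i) (lamS i m)"
          using m1 by (simp add: eF_def bF'_def)
        have "\<bar>eF i m\<bar> \<le> E m" using s1 s2 unfolding E_def by linarith
        thus ?thesis using s3 by simp
      qed
      have hG: "\<bar>UB (bG m $ i) (lamS i m) - erlangC_tilde (bG m $ i) (lamS i m)\<bar> \<le> E m" for i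
      proof -
        have s1: "\<bar>eG i m\<bar> \<le> (\<Sum>i\<in>UNIV. \<bar>eG i m\<bar>)" by (rule member_le_sum) auto
        have s2: "(\<Sum>i\<in>UNIV. \<bar>eF i m\<bar>) \<ge> 0" by (simp add: sum_nonneg)
        have s3: "eG i m = UB (bG m $ i) (lamS i m) - erlangC_tilde (bG m $ i) (lamS i m)"
          using m1 by (simp add: eG_def bG'_def)
        have "\<bar>eG i m\<bar> \<le> E m" using s1 s2 unfolding E_def by linarith
        thus ?thesis using s3 by simp
      qed
      have kF: "\<bar>f_obj c \<delta> lam0 m (bF m) - g_obj c \<delta> lam0 m (bF m)\<bar> \<le> \<delta> * (C * E m)"
        by (rule key[OF m1 hF E1])
      have kG: "\<bar>f_obj c \<delta> lam0 m (bG m) - g_obj c \<delta> lam0 m (bG m)\<bar> \<le> \<delta> * (C * E m)"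
        by (rule key[OF m1 hG E1])
      have gm: "g_obj c \<delta> lam0 m (bG m) \<le> g_obj c \<delta> lam0 m (bF m)" using bG_min bF_mem m1 by auto
      show ?case using kF kG gm by (simp add: abs_le_iff)
    qed
    show "(\<lambda>_. 0) \<longlonglongrightarrow> (0::real)" by simp
    show "(\<lambda>m. 2 * (\<delta> * (C * E m))) \<longlonglongrightarrow> 0"
      using tendsto_mult[OF tendsto_const[of "2 * (\<delta> * C)"] E] by (simp add: mult_ac)
  qed
qed


end
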